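(* Let $\mathcal D$ be a set and $x,y\in\mathcal D$, viewed as one-vertex decorated trees in the (completed) Grossman--Larson algebra $GL$. Then $$ \exp(x)\ast\exp(y)=\exp\big(y+\{x;\exp(y)\}\big), $$ where $\exp$ denotes the exponential with respect to the commutative product of $GL$, $\ast$ is the Grossman--Larson product, and $\{x;\exp(y)\}:=x\curvearrowleft\exp(y)=\sum_{n\ge0}\frac{1}{n!}\,x\curvearrowleft y^n$.
   Context: $k$ is a field of characteristic zero. $\mathcal T$ is the span of $\mathcal D$-decorated rooted trees; for trees $t,t'$, $t\curvearrowleft t'$ is the sum over vertices $v$ of $t$ of the tree obtained by joining $v$ to the root of $t'$ by a new edge. $GL=S(\mathcal T)$ is the span of forests (commutative monomials in trees, commutative product written as juxtaposition, unit the empty forest $e$). Forests act on trees by $t\curvearrowleft e=t$, $t\curvearrowleft(t_1\cdots t_n)=(t\curvearrowleft(t_1\cdots t_{n-1}))\curvearrowleft t_n-\sum_{i=1}^{n-1}t\curvearrowleft(t_1\cdots(t_i\curvearrowleft t_n)\cdots t_{n-1})$. The Grossman--Larson product is $(t_1\cdots t_n)\ast(t'_1\cdots t'_m)=\sum_f F_0(t_1\curvearrowleft F_1)\cdots(t_n\curvearrowleft F_n)$ over all maps $f:\{1..m\}\to\{0..n\}$, $F_i=\prod_{j\in f^{-1}(i)}t'_j$ (empty product $e$), with unit $e$. All products respect the grading by total number of vertices, and the exponentials $\exp(z)=\sum_{n\ge0}z^n/n!$ (commutative powers) are taken in the completion of $GL$ with respect to this grading. *)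

theory Defs
  imports "HOL-Library.Multiset" "HOL-Library.FuncSet"
begin

text \<open>A forest is a multiset of trees
  (commutative monomial; the empty multiset is the empty forest e).\<close>

datatype 'd dtree = Node 'd "'d dtree multiset"

type_synonym 'd forest = "'d dtree multiset"

text \<open>Elements of the span of trees / of GL (and of their completions) are represented
  by coefficient functions.\<close>

type_synonym ('d,'k) tcomb = "'d dtree \<Rightarrow> 'k"
type_synonym ('d,'k) fcomb = "'d forest \<Rightarrow> 'k"

text \<open>Only finitely many terms are nonzero in all
  uses below, so this is the ordinary (formal) sum.\<close>

definition lin :: "('a \<Rightarrow> 'b \<Rightarrow> 'k::comm_ring_1) \<Rightarrow> ('a \<Rightarrow> 'k) \<Rightarrow> 'b \<Rightarrow> 'k" where
  "lin T c b = (\<Sum>a\<in>{a. c a \<noteq> 0 \<and> T a b \<noteq> 0}. c a * T a b)"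

definition single :: "'a \<Rightarrow> 'a \<Rightarrow> 'k::comm_ring_1" where
  "single a = (\<lambda>b. if b = a then 1 else 0)"

text \<open>graft t s = t \<curvearrowleft> s: the sum over the vertices v of t of the tree obtained by
  joining v to the root of s by a new edge (as a multiset of trees = sum with
  nonnegative integer coefficients).\<close>

function graft :: "'d dtree \<Rightarrow> 'd dtree \<Rightarrow> 'd dtree multiset" where
  "graft (Node d cs) s =
     {# Node d (add_mset s cs) #} +
     (\<Sum>\<^sub># (image_mset (\<lambda>c. image_mset (\<lambda>c'. Node d (add_mset c' (cs - {#c#}))) (graft c s)) cs))"
  by pat_completeness auto
termination
  by (relation "measure (\<lambda>(t, s). size t)") (auto simp: size_multiset_overloaded_eq dest!: multi_member_split)

text \<open>act_r t rs with rs = [t_n, ..., t_1] (the list of the forest t_1...t_n written in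
  reverse order, so that the last factor t_n is the head) is t \<curvearrowleft> (t_1 ... t_n), given by
  the recursion
  t \<curvearrowleft> e = t,
  t \<curvearrowleft> (t_1...t_n) = (t \<curvearrowleft> (t_1...t_{n-1})) \<curvearrowleft> t_n
       - sum_{i<n} t \<curvearrowleft> (t_1...(t_i \<curvearrowleft> t_n)...t_{n-1}),
  everything extended linearly.\<close>

definition graft_lin :: "('d,'k::comm_ring_1) tcomb \<Rightarrow> 'd dtree \<Rightarrow> ('d,'k) tcomb" where
  "graft_lin c s = lin (\<lambda>w u. of_nat (count (graft w s) u)) c"

function act_r :: "'d dtree \<Rightarrow> 'd dtree list \<Rightarrow> ('d,'k::comm_ring_1) tcomb" where
  "act_r t [] = single t"
| "act_r t (s # rs) = (\<lambda>u. graft_lin (act_r t rs) s u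
      - (\<Sum>i<length rs. \<Sum>v\<in>set_mset (graft (rs ! i) s).
            of_nat (count (graft (rs ! i) s) v) * act_r t (rs[i := v]) u))"
  by pat_completeness auto
termination
  by (relation "measure (\<lambda>(t, rs). length rs)") auto

text \<open>t \<curvearrowleft> F for a forest F (the paper's definition, via any ordering of the
  factors of F).\<close>

definition act :: "'d dtree \<Rightarrow> 'd forest \<Rightarrow> ('d,'k::comm_ring_1) tcomb" where
  "act t F = act_r t (rev (SOME xs. mset xs = F))"

definition act_lin :: "'d dtree \<Rightarrow> ('d,'k::comm_ring_1) fcomb \<Rightarrow> ('d,'k) tcomb" where
  "act_lin t c = lin (act t) c"

definition fmult :: "('d,'k::comm_ring_1) fcomb \<Rightarrow> ('d,'k) fcomb \<Rightarrow> ('d,'k) fcomb" where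
  "fmult a b F = (\<Sum>G\<in>{G. G \<subseteq># F}. a G * b (F - G))"

definition funit :: "('d,'k::comm_ring_1) fcomb" where
  "funit = single {#}"

primrec fpow :: "('d,'k::comm_ring_1) fcomb \<Rightarrow> nat \<Rightarrow> ('d,'k) fcomb" where
  "fpow z 0 = funit"
| "fpow z (Suc n) = fmult z (fpow z n)"

definition fprod :: "('d,'k::comm_ring_1) fcomb list \<Rightarrow> ('d,'k) fcomb" where
  "fprod xs = foldr fmult xs funit"

text \<open>exp(z) = sum_n z^n / n! (formal sum; for z without constant term only finitely
  many summands contribute to each coefficient).\<close>

definition fexp :: "('d,'k::field_char_0) fcomb \<Rightarrow> ('d,'k) fcomb" where
  "fexp z F = (\<Sum>n\<in>{n. fpow z n F \<noteq> 0}. fpow z n F / fact n)"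

definition tree_emb :: "('d,'k::comm_ring_1) tcomb \<Rightarrow> ('d,'k) fcomb" where
  "tree_emb c = lin (\<lambda>t. single {#t#}) c"

text \<open>On forests (t_1...t_n) * (t'_1...t'_m) = sum over f: {1..m} -> {0..n} of
  F_0 (t_1 \<curvearrowleft> F_1)...(t_n \<curvearrowleft> F_n); here indices are shifted to start at 0:
  ts ! i is t_{i+1}, ss ! j is t'_{j+1}, and f j = Suc i means t'_{j+1} goes to t_{i+1}.\<close>

definition gl_basis :: "'d forest \<Rightarrow> 'd forest \<Rightarrow> ('d,'k::comm_ring_1) fcomb" where
  "gl_basis F G = (let ts = (SOME xs. mset xs = F); ss = (SOME xs. mset xs = G);
       n = length ts; m = length ss in
     (\<lambda>H. \<Sum>f\<in>{..<m} \<rightarrow>\<^sub>E {..n}.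
        fmult (single (image_mset (nth ss) (mset_set {j\<in>{..<m}. f j = 0})))
              (fprod (map (\<lambda>i. tree_emb (act (ts ! i) (image_mset (nth ss) (mset_set {j\<in>{..<m}. f j = Suc i}))))
                          [0..<n])) H))"

definition gl :: "('d,'k::comm_ring_1) fcomb \<Rightarrow> ('d,'k) fcomb \<Rightarrow> ('d,'k) fcomb" where
  "gl a b H = (\<Sum>(F,G)\<in>{(F,G). a F \<noteq> 0 \<and> b G \<noteq> 0 \<and> (gl_basis F G H :: 'k) \<noteq> 0}.
                 a F * b G * gl_basis F G H)"

definition leaf :: "'d \<Rightarrow> 'd dtree" where
  "leaf d = Node d {#}"

end

theory Submission
  imports Defs
begin

lemma single_apply: "single a b = (if b = a then 1 else 0)"
  by (simp add: single_def)

lemma finite_submsets: "finite {G. G \<subseteq># (F::'a multiset)}"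
proof -
  have "{G. G \<subseteq># F} \<subseteq> mset ` {xs. set xs \<subseteq> set_mset F \<and> length xs \<le> size F}"
  proof
    fix G assume "G \<in> {G. G \<subseteq># F}"
    hence G: "G \<subseteq># F" by simp
    obtain xs where xs: "mset xs = G" using ex_mset by blast
    have "set xs \<subseteq> set_mset F" using G xs by (metis mset_subset_eqD set_mset_mset subsetI)
    moreover have "length xs \<le> size F" using G xs by (metis size_mset size_mset_mono)
    ultimately show "G \<in> mset ` {xs. set xs \<subseteq> set_mset F \<and> length xs \<le> size F}" using xs by blast
  qed
  moreover have "finite {xs. set xs \<subseteq> set_mset F \<and> length xs \<le> size F}"
    by (rule finite_lists_length_le) simp
  ultimately show ?thesis by (meson finite_imageI finite_subset)
qed

lemma tree_emb_single_tree: "tree_emb (c::'a dtree \<Rightarrow> 'k::comm_ring_1) {#t#} = c t"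
proof -
  have "{a. c a \<noteq> 0 \<and> (single {#a#} {#t#} :: 'k) \<noteq> 0} = (if c t = 0 then {} else {t})"
    by (auto simp: single_apply)
  thus ?thesis by (simp add: tree_emb_def lin_def single_apply)
qed

lemma tree_emb_other: "\<not>(\<exists>t. G = {#t#}) \<Longrightarrow> tree_emb (c::'a dtree \<Rightarrow> 'k::comm_ring_1) G = 0"
proof -
  assume "\<not>(\<exists>t. G = {#t#})"
  hence e: "{a. c a \<noteq> 0 \<and> (single {#a#} G :: 'k) \<noteq> 0} = {}"
    by (auto simp: single_apply)
  show ?thesis unfolding tree_emb_def lin_def e by simp
qed

lemma fmult_tree_emb:
  "fmult (tree_emb c) w H = (\<Sum>t\<in>set_mset H. c t * w (H - {#t#}))"
proof -
  have "fmult (tree_emb c) w H = (\<Sum>G\<in>{G. G \<subseteq># H}. tree_emb c G * w (H - G))"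
    by (simp add: fmult_def)
  also have "\<dots> = (\<Sum>G\<in>(\<lambda>t. {#t#}) ` set_mset H. tree_emb c G * w (H - G))"
  proof (rule sum.mono_neutral_right)
    show "finite {G. G \<subseteq># H}" by (rule finite_submsets)
    show "(\<lambda>t. {#t#}) ` set_mset H \<subseteq> {G. G \<subseteq># H}" by auto
    show "\<forall>i\<in>{G. G \<subseteq># H} - (\<lambda>t. {#t#}) ` set_mset H. tree_emb c i * w (H - i) = 0"
    proof
      fix G assume "G \<in> {G. G \<subseteq># H} - (\<lambda>t. {#t#}) ` set_mset H"
      hence "\<not>(\<exists>t. G = {#t#})" by auto
      thus "tree_emb c G * w (H - G) = 0" by (simp add: tree_emb_other)
    qed
  qed
  also have "\<dots> = (\<Sum>t\<in>set_mset H. c t * w (H - {#t#}))"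
    by (subst sum.reindex) (auto simp: inj_on_def tree_emb_single_tree)
  finally show ?thesis .
qed

lemma fmult_single_single: "fmult (single A) (single B) F = single (A + B) F"
proof -
  have "fmult (single A) (single B) F = (\<Sum>G\<in>{G. G \<subseteq># F}. if G = A \<and> F - G = B then 1 else 0)"
    by (simp add: fmult_def single_apply if_distrib cong: if_cong) (rule sum.cong, auto)
  also have "\<dots> = (if A \<subseteq># F \<and> F - A = B then 1 else 0)"
  proof (cases "A \<subseteq># F \<and> F - A = B")
    case True
    hence "{G. G \<subseteq># F} \<inter> {G. G = A \<and> F - G = B} = {A}" by auto
    thus ?thesis using True by (simp add: sum.If_cases finite_submsets)
  next
    case False
    hence "{G. G \<subseteq># F} \<inter> {G. G = A \<and> F - G = B} = {}" by auto
    thus ?thesis using False by (simp add: sum.If_cases finite_submsets)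
  qed
  also have "\<dots> = single (A + B) F"
    by (auto simp: single_apply)
  finally show ?thesis .
qed

definition pexp :: "('a \<Rightarrow> 'k::field_char_0) \<Rightarrow> 'a multiset \<Rightarrow> 'k" where
  "pexp c H = (\<Prod>t\<in>set_mset H. c t ^ count H t / fact (count H t))"

lemma pexp_superset:
  assumes "finite S" "set_mset H \<subseteq> S"
  shows "pexp c H = (\<Prod>t\<in>S. c t ^ count H t / fact (count H t))"
  unfolding pexp_def
  by (rule prod.mono_neutral_left) (use assms in \<open>auto simp: not_in_iff\<close>)

lemma fact_aux: "(a::'k::field_char_0) ^ Suc j / fact (Suc j) * P * of_nat (Suc j) = a * (a ^ j / fact j * P)"
proof -
  have "(fact (Suc j) :: 'k) = of_nat (Suc j) * fact j" by simp
  moreover have "(of_nat (Suc j) :: 'k) \<noteq> 0" by (simp del: of_nat_Suc)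
  moreover have "(fact j :: 'k) \<noteq> 0" by simp
  ultimately show ?thesis by (simp add: field_simps del: of_nat_Suc)
qed

lemma pexp_remove:
  assumes "t \<in># H"
  shows "pexp c H * of_nat (count H t) = c t * pexp c (H - {#t#})"
proof -
  let ?S = "set_mset H"
  have fin: "finite ?S" by simp
  have sub: "set_mset (H - {#t#}) \<subseteq> ?S" by (meson in_diffD subsetI)
  obtain j where j: "count H t = Suc j" using assms by (metis count_greater_zero_iff not0_implies_Suc not_gr0)
  have cnt: "count (H - {#t#}) u = (if u = t then j else count H u)" for u
    using j by auto
  have A: "pexp c H = c t ^ Suc j / fact (Suc j) * (\<Prod>u\<in>?S - {t}. c u ^ count H u / fact (count H u))"
    unfolding pexp_def using assms j by (simp add: prod.remove)
  have B: "pexp c (H - {#t#}) = c t ^ j / fact j * (\<Prod>u\<in>?S - {t}. c u ^ count H u / fact (count H u))"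
  proof -
    have "pexp c (H - {#t#}) = (\<Prod>u\<in>?S. c u ^ (if u = t then j else count H u) / fact (if u = t then j else count H u))"
      unfolding pexp_superset[OF fin sub] cnt ..
    also have "\<dots> = c t ^ j / fact j * (\<Prod>u\<in>?S - {t}. c u ^ (if u = t then j else count H u) / fact (if u = t then j else count H u))"
      using assms by (simp add: prod.remove)
    also have "\<dots> = c t ^ j / fact j * (\<Prod>u\<in>?S - {t}. c u ^ count H u / fact (count H u))"
      by (rule arg_cong[where f="\<lambda>z. _ * z"], rule prod.cong) auto
    finally show ?thesis .
  qed
  show ?thesis unfolding A B j by (rule fact_aux)
qed

lemma pexp_rec:
  "of_nat (size H) * pexp c H = (\<Sum>t\<in>set_mset H. c t * pexp c (H - {#t#}))"
proof -
  have "of_nat (size H) * pexp c H = (\<Sum>t\<in>set_mset H. pexp c H * of_nat (count H t))"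
    by (simp add: size_multiset_overloaded_eq sum_distrib_left mult.commute)
  also have "\<dots> = (\<Sum>t\<in>set_mset H. c t * pexp c (H - {#t#}))"
    by (rule sum.cong) (auto simp: pexp_remove)
  finally show ?thesis .
qed

lemma pexp_empty[simp]: "pexp c {#} = 1"
  by (simp add: pexp_def)

lemma fpow_tree_emb:
  "fpow (tree_emb c) n H = (if size H = n then fact n * pexp c H else 0)"
proof (induction n arbitrary: H)
  case 0
  show ?case by (simp add: funit_def single_apply)
next
  case (Suc n)
  have "fpow (tree_emb c) (Suc n) H = (\<Sum>t\<in>set_mset H. c t * fpow (tree_emb c) n (H - {#t#}))"
    by (simp add: fmult_tree_emb)
  also have "\<dots> = (\<Sum>t\<in>set_mset H. c t * (if size H = Suc n then fact n * pexp c (H - {#t#}) else 0))"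
  proof (rule sum.cong)
    fix t assume t: "t \<in> set_mset H"
    hence "size (H - {#t#}) = size H - 1" by (simp add: size_Diff_singleton)
    moreover have "size H > 0" using t by (cases H) auto
    ultimately have "(size (H - {#t#}) = n) = (size H = Suc n)" by auto
    thus "c t * fpow (tree_emb c) n (H - {#t#}) = c t * (if size H = Suc n then fact n * pexp c (H - {#t#}) else 0)"
      by (simp add: Suc.IH)
  qed simp
  also have "\<dots> = (if size H = Suc n then fact (Suc n) * pexp c H else 0)"
  proof (cases "size H = Suc n")
    case True
    have "(\<Sum>t\<in>set_mset H. c t * (fact n * pexp c (H - {#t#}))) = fact n * (\<Sum>t\<in>set_mset H. c t * pexp c (H - {#t#}))"
      by (simp add: sum_distrib_left algebra_simps)
    also have "\<dots> = fact n * (of_nat (size H) * pexp c H)" by (simp add: pexp_rec)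
    finally show ?thesis using True by simp
  qed simp
  finally show ?case .
qed

lemma fexp_tree_emb: "fexp (tree_emb c) H = pexp c H"
proof -
  have "{n. fpow (tree_emb c) n H \<noteq> 0} = (if pexp c H = 0 then {} else {size H})"
    by (auto simp: fpow_tree_emb)
  thus ?thesis by (auto simp: fexp_def fpow_tree_emb)
qed

lemma count_sum_mset: "count (\<Sum>\<^sub># MM) u = (\<Sum>X\<in>#MM. count X u)"
  by (induction MM) auto

lemma graft_lin_single: "graft_lin (single T :: 'a dtree \<Rightarrow> 'k::comm_ring_1) s u = of_nat (count (graft T s) u)"
proof -
  have "{a. (single T a :: 'k) \<noteq> 0 \<and> (of_nat (count (graft a s) u) :: 'k) \<noteq> 0}
        = (if (of_nat (count (graft T s) u) :: 'k) = 0 then {} else {T})"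
    by (auto simp: single_apply)
  thus ?thesis unfolding graft_lin_def lin_def by (auto simp: single_apply)
qed

lemma sum_count_single:
  "(\<Sum>v\<in>set_mset A. (of_nat (count A v) :: 'k::comm_ring_1) * single (g v) u) = of_nat (count (image_mset g A) u)"
proof -
  have "(\<Sum>v\<in>set_mset A. (of_nat (count A v) :: 'k) * single (g v) u)
      = (\<Sum>v\<in>set_mset A. if v \<in> g -` {u} then of_nat (count A v) else 0)"
    by (rule sum.cong) (auto simp: single_apply)
  also have "\<dots> = (\<Sum>v\<in>g -` {u} \<inter> set_mset A. of_nat (count A v))"
    by (simp add: sum.If_cases Int_commute vimage_def)
  also have "\<dots> = of_nat (count (image_mset g A) u)"
    by (simp add: count_image_mset)
  finally show ?thesis .
qed

lemma sum_nth_mset: "(\<Sum>i<length xs. h (xs ! i)) = (\<Sum>c\<in>#mset xs. (h c :: 'b::comm_monoid_add))"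
proof -
  have "(\<Sum>i<length xs. h (xs ! i)) = sum_list (map h xs)"
    by (simp add: sum_list_sum_nth lessThan_atLeast0)
  also have "\<dots> = (\<Sum>c\<in>#mset xs. h c)"
    by (metis mset_map sum_mset_sum_list)
  finally show ?thesis .
qed

lemma act_r_leaf: "act_r (Node d {#}) rs = (single (Node d (mset rs)) :: 'a dtree \<Rightarrow> 'k::comm_ring_1)"
proof (induction rs rule: measure_induct_rule[of length])
  case (less rs)
  show ?case
  proof (cases rs)
    case Nil
    thus ?thesis by simp
  next
    case (Cons s rs')
    let ?M = "mset rs'"
    let ?g = "\<lambda>c c'. Node d (add_mset c' (?M - {#c#}))"
    have IH1: "act_r (Node d {#}) rs' = (single (Node d ?M) :: 'a dtree \<Rightarrow> 'k)"
      using less Cons by simp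
    have IH2: "act_r (Node d {#}) (rs'[i := v]) = (single (?g (rs' ! i) v) :: 'a dtree \<Rightarrow> 'k)" if "i < length rs'" for i v
      using less Cons that by (simp add: mset_update)
    show ?thesis
    proof
      fix u
      have "act_r (Node d {#}) rs u = of_nat (count (graft (Node d ?M) s) u)
         - (\<Sum>i<length rs'. \<Sum>v\<in>set_mset (graft (rs' ! i) s).
              of_nat (count (graft (rs' ! i) s) v) * (single (?g (rs' ! i) v) u :: 'k))"
        unfolding Cons act_r.simps IH1 graft_lin_single
        by (intro arg_cong2[where f="(-)"] refl sum.cong) (simp_all add: IH2)
      also have "(\<Sum>i<length rs'. \<Sum>v\<in>set_mset (graft (rs' ! i) s).
              of_nat (count (graft (rs' ! i) s) v) * (single (?g (rs' ! i) v) u :: 'k))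
         = (\<Sum>i<length rs'. of_nat (count (image_mset (?g (rs' ! i)) (graft (rs' ! i) s)) u))"
        by (simp add: sum_count_single)
      also have "\<dots> = (\<Sum>c\<in>#?M. of_nat (count (image_mset (?g c) (graft c s)) u))"
        by (rule sum_nth_mset)
      also have "of_nat (count (graft (Node d ?M) s) u) = (of_nat (count {#Node d (add_mset s ?M)#} u) :: 'k)
          + (\<Sum>c\<in>#?M. of_nat (count (image_mset (?g c) (graft c s)) u))"
        by (simp add: count_sum_mset of_nat_sum_mset multiset.map_comp o_def)
      finally have eq: "act_r (Node d {#}) rs u = (of_nat (count {#Node d (add_mset s ?M)#} u) :: 'k)"
        by (simp only: add_diff_cancel)
      show "act_r (Node d {#}) rs u = (single (Node d (mset rs)) u :: 'k)"
        by (rule trans[OF eq]) (simp add: Cons single_apply)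
    qed
  qed
qed

lemma act_leaf: "act (Node d {#}) F = (single (Node d F) :: 'a dtree \<Rightarrow> 'k::comm_ring_1)"
proof -
  have "mset (SOME xs. mset xs = F) = F" by (rule someI_ex) (rule ex_mset)
  thus ?thesis by (simp add: act_def act_r_leaf)
qed

section \<open>Combinatorics\<close>

definition Ct :: "'d \<Rightarrow> 'd \<Rightarrow> nat \<Rightarrow> 'd dtree" where
  "Ct x y k = Node x (replicate_mset k (leaf y))"

definition fib :: "nat set \<Rightarrow> (nat \<Rightarrow> nat) \<Rightarrow> nat \<Rightarrow> nat" where
  "fib A f j = card {a\<in>A. f a = j}"

definition KK :: "'d \<Rightarrow> 'd \<Rightarrow> nat set \<Rightarrow> nat \<Rightarrow> (nat \<Rightarrow> nat) \<Rightarrow> 'd forest" where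
  "KK x y A n f = replicate_mset (fib A f 0) (leaf y) + mset (map (\<lambda>i. Ct x y (fib A f (Suc i))) [0..<n])"

definition ext_f :: "nat set \<Rightarrow> nat \<Rightarrow> (nat \<Rightarrow> nat) \<Rightarrow> nat \<Rightarrow> nat" where
  "ext_f S n g = (\<lambda>a. if a \<in> S then Suc n else g a)"

lemma ext_f_PiE:
  assumes "S \<subseteq> A" "g \<in> (A - S) \<rightarrow>\<^sub>E {..n}"
  shows "ext_f S n g \<in> A \<rightarrow>\<^sub>E {..Suc n}" "{a\<in>A. ext_f S n g a = Suc n} = S"
  using assms by (auto simp: ext_f_def PiE_def extensional_def Pi_def)

lemma ext_f_restrict:
  assumes "f \<in> A \<rightarrow>\<^sub>E {..Suc n}" "S = {a\<in>A. f a = Suc n}"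
  shows "restrict f (A - S) \<in> (A - S) \<rightarrow>\<^sub>E {..n}" "ext_f S n (restrict f (A - S)) = f"
proof -
  show "restrict f (A - S) \<in> (A - S) \<rightarrow>\<^sub>E {..n}"
    using assms by (auto simp: PiE_def Pi_def le_Suc_eq)
  show "ext_f S n (restrict f (A - S)) = f"
  proof
    fix a show "ext_f S n (restrict f (A - S)) a = f a"
      using assms by (cases "a \<in> A") (auto simp: ext_f_def PiE_def extensional_def)
  qed
qed

lemma fib_ext_f:
  assumes "S \<subseteq> A" "g \<in> (A - S) \<rightarrow>\<^sub>E {..n}"
  shows "j \<le> n \<Longrightarrow> fib A (ext_f S n g) j = fib (A - S) g j"
    and "fib A (ext_f S n g) (Suc n) = card S"
proof -
  assume j: "j \<le> n"
  have "{a\<in>A. ext_f S n g a = j} = {a\<in>A - S. g a = j}"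
    using j by (auto simp: ext_f_def)
  thus "fib A (ext_f S n g) j = fib (A - S) g j" by (simp add: fib_def)
next
  show "fib A (ext_f S n g) (Suc n) = card S"
    using ext_f_PiE(2)[OF assms] by (simp add: fib_def)
qed

lemma KK_ext_f:
  assumes "S \<subseteq> A" "g \<in> (A - S) \<rightarrow>\<^sub>E {..n}"
  shows "KK x y A (Suc n) (ext_f S n g) = add_mset (Ct x y (card S)) (KK x y (A - S) n g)"
proof -
  have "map (\<lambda>i. Ct x y (fib A (ext_f S n g) (Suc i))) [0..<n] = map (\<lambda>i. Ct x y (fib (A - S) g (Suc i))) [0..<n]"
    by (rule map_cong) (auto simp: fib_ext_f[OF assms])
  note m = this
  show ?thesis
    unfolding KK_def upt_Suc_append[OF le0] map_append mset_append m fib_ext_f(1)[OF assms le0]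
    by (simp add: fib_ext_f(2)[OF assms])
qed

lemma add_mset_eq_iff_diff: "(add_mset a M = H) = (a \<in># H \<and> M = H - {#a#})"
  by auto

lemma card_fibers_Suc:
  assumes "finite A"
  shows "card {f\<in>A \<rightarrow>\<^sub>E {..Suc n}. KK x y A (Suc n) f = H}
       = (\<Sum>S\<in>Pow A. if Ct x y (card S) \<in># H
             then card {g\<in>(A - S) \<rightarrow>\<^sub>E {..n}. KK x y (A - S) n g = H - {#Ct x y (card S)#}} else 0)"
proof -
  define T where "T S = {f\<in>A \<rightarrow>\<^sub>E {..Suc n}. KK x y A (Suc n) f = H \<and> {a\<in>A. f a = Suc n} = S}" for S
  define G where "G S = {g\<in>(A - S) \<rightarrow>\<^sub>E {..n}. KK x y (A - S) n g = H - {#Ct x y (card S)#}}" for S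
  have U: "{f\<in>A \<rightarrow>\<^sub>E {..Suc n}. KK x y A (Suc n) f = H} = (\<Union>S\<in>Pow A. T S)"
    by (auto simp: T_def)
  have finT: "finite (T S)" for S
    by (rule finite_subset[of _ "A \<rightarrow>\<^sub>E {..Suc n}"]) (auto simp: T_def assms finite_PiE)
  have cardT: "card (T S) = (if Ct x y (card S) \<in># H then card (G S) else 0)" if S: "S \<in> Pow A" for S
  proof -
    have SA: "S \<subseteq> A" using S by simp
    have img: "T S = ext_f S n ` {g\<in>(A - S) \<rightarrow>\<^sub>E {..n}. add_mset (Ct x y (card S)) (KK x y (A - S) n g) = H}"
    proof
      show "T S \<subseteq> ext_f S n ` {g\<in>(A - S) \<rightarrow>\<^sub>E {..n}. add_mset (Ct x y (card S)) (KK x y (A - S) n g) = H}"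
      proof
        fix f assume f: "f \<in> T S"
        hence fP: "f \<in> A \<rightarrow>\<^sub>E {..Suc n}" and Sf: "S = {a\<in>A. f a = Suc n}" and K: "KK x y A (Suc n) f = H"
          by (auto simp: T_def)
        note r = ext_f_restrict[OF fP Sf]
        have "add_mset (Ct x y (card S)) (KK x y (A - S) n (restrict f (A - S))) = H"
        proof -
          have "KK x y A (Suc n) (ext_f S n (restrict f (A - S))) = add_mset (Ct x y (card S)) (KK x y (A - S) n (restrict f (A - S)))"
            by (rule KK_ext_f[OF SA r(1)])
          thus ?thesis using K r(2) by simp
        qed
        thus "f \<in> ext_f S n ` {g\<in>(A - S) \<rightarrow>\<^sub>E {..n}. add_mset (Ct x y (card S)) (KK x y (A - S) n g) = H}"
          using r by (metis (mono_tags, lifting) image_eqI mem_Collect_eq)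
      qed
    next
      show "ext_f S n ` {g\<in>(A - S) \<rightarrow>\<^sub>E {..n}. add_mset (Ct x y (card S)) (KK x y (A - S) n g) = H} \<subseteq> T S"
      proof
        fix f assume "f \<in> ext_f S n ` {g\<in>(A - S) \<rightarrow>\<^sub>E {..n}. add_mset (Ct x y (card S)) (KK x y (A - S) n g) = H}"
        then obtain g where g: "g \<in> (A - S) \<rightarrow>\<^sub>E {..n}" "add_mset (Ct x y (card S)) (KK x y (A - S) n g) = H"
          and f: "f = ext_f S n g" by blast
        have "KK x y A (Suc n) (ext_f S n g) = add_mset (Ct x y (card S)) (KK x y (A - S) n g)"
          by (rule KK_ext_f[OF SA g(1)])
        with g(2) have "KK x y A (Suc n) (ext_f S n g) = H" by simp
        thus "f \<in> T S" unfolding T_def f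
          using ext_f_PiE[OF SA g(1)] by simp
      qed
    qed
    have inj: "inj_on (ext_f S n) ((A - S) \<rightarrow>\<^sub>E {..n})"
    proof (rule inj_onI)
      fix g1 g2 assume g1: "g1 \<in> (A - S) \<rightarrow>\<^sub>E {..n}" and g2: "g2 \<in> (A - S) \<rightarrow>\<^sub>E {..n}"
        and eq: "ext_f S n g1 = ext_f S n g2"
      show "g1 = g2"
      proof
        fix a show "g1 a = g2 a"
        proof (cases "a \<in> S")
          case True
          thus ?thesis using g1 g2 by (auto simp: PiE_def extensional_def)
        next
          case False
          thus ?thesis using fun_cong[OF eq, of a] by (simp add: ext_f_def)
        qed
      qed
    qed
    have "card (T S) = card {g\<in>(A - S) \<rightarrow>\<^sub>E {..n}. add_mset (Ct x y (card S)) (KK x y (A - S) n g) = H}"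
      unfolding img by (rule card_image) (rule inj_on_subset[OF inj], auto)
    also have "\<dots> = (if Ct x y (card S) \<in># H then card (G S) else 0)"
      unfolding G_def add_mset_eq_iff_diff by auto
    finally show ?thesis .
  qed
  have "card (\<Union>S\<in>Pow A. T S) = (\<Sum>S\<in>Pow A. card (T S))"
    apply (rule card_UN_disjoint)
    subgoal by (simp add: assms)
    subgoal using finT by blast
    subgoal by (auto simp: T_def)
    done
  also have "\<dots> = (\<Sum>S\<in>Pow A. if Ct x y (card S) \<in># H then card (G S) else 0)"
    by (rule sum.cong) (auto simp: cardT)
  finally show ?thesis unfolding U G_def .
qed

primrec Nc :: "'d \<Rightarrow> 'd \<Rightarrow> nat \<Rightarrow> nat \<Rightarrow> 'd forest \<Rightarrow> nat" where
  "Nc x y 0 m H = (if H = replicate_mset m (leaf y) then 1 else 0)"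
| "Nc x y (Suc n) m H = (\<Sum>k\<le>m. (m choose k) * (if Ct x y k \<in># H then Nc x y n (m - k) (H - {#Ct x y k#}) else 0))"

lemma sum_Pow_card:
  assumes "finite A"
  shows "(\<Sum>S\<in>Pow A. (g (card S) (card (A - S)) :: nat)) = (\<Sum>k\<le>card A. (card A choose k) * g k (card A - k))"
proof -
  have "(\<Sum>S\<in>Pow A. g (card S) (card (A - S))) = (\<Sum>k\<in>{..card A}. \<Sum>S\<in>{S\<in>Pow A. card S = k}. g (card S) (card (A - S)))"
    by (rule sum.group[symmetric]) (auto simp: assms card_mono)
  also have "\<dots> = (\<Sum>k\<le>card A. (card A choose k) * g k (card A - k))"
  proof (rule sum.cong)
    fix k assume "k \<in> {..card A}"
    have "(\<Sum>S\<in>{S\<in>Pow A. card S = k}. g (card S) (card (A - S))) = (\<Sum>S\<in>{S\<in>Pow A. card S = k}. g k (card A - k))"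
      by (rule sum.cong) (auto simp: card_Diff_subset finite_subset[OF _ assms])
    also have "\<dots> = card {S. S \<subseteq> A \<and> card S = k} * g k (card A - k)"
      by (simp add: Pow_def)
    also have "\<dots> = (card A choose k) * g k (card A - k)"
      by (simp add: n_subsets assms)
    finally show "(\<Sum>S\<in>{S\<in>Pow A. card S = k}. g (card S) (card (A - S))) = (card A choose k) * g k (card A - k)" .
  qed simp
  finally show ?thesis .
qed

lemma card_fibers_0:
  assumes "finite A"
  shows "card {f\<in>A \<rightarrow>\<^sub>E {..0}. KK x y A 0 f = H} = (if H = replicate_mset (card A) (leaf y) then 1 else 0)"
proof -
  define f0 where "f0 = (\<lambda>a::nat. if a \<in> A then 0::nat else undefined)"
  have P: "f \<in> A \<rightarrow>\<^sub>E {..0} \<longleftrightarrow> f = f0" for f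
  proof
    assume "f \<in> A \<rightarrow>\<^sub>E {..0}"
    thus "f = f0" by (auto simp: f0_def PiE_def extensional_def Pi_def)
  qed (auto simp: f0_def)
  have K: "KK x y A 0 f0 = replicate_mset (card A) (leaf y)"
    by (simp add: KK_def fib_def f0_def)
  have "{f\<in>A \<rightarrow>\<^sub>E {..0}. KK x y A 0 f = H} = (if H = replicate_mset (card A) (leaf y) then {f0} else {})"
    using P K by auto
  thus ?thesis by simp
qed

lemma NN_Nc:
  "finite A \<Longrightarrow> card {f\<in>A \<rightarrow>\<^sub>E {..n}. KK x y A n f = H} = Nc x y n (card A) H"
proof (induction n arbitrary: A H)
  case 0
  thus ?case unfolding Nc.simps by (rule card_fibers_0)
next
  case (Suc n)
  have "card {f\<in>A \<rightarrow>\<^sub>E {..Suc n}. KK x y A (Suc n) f = H}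
      = (\<Sum>S\<in>Pow A. (\<lambda>k j. if Ct x y k \<in># H then Nc x y n j (H - {#Ct x y k#}) else 0) (card S) (card (A - S)))"
    unfolding card_fibers_Suc[OF Suc.prems]
    by (rule sum.cong) (auto simp: Suc.IH Suc.prems)
  also have "\<dots> = Nc x y (Suc n) (card A) H"
    by (subst sum_Pow_card[OF Suc.prems]) simp
  finally show ?case .
qed

lemma some_mset_replicate: "(SOME xs. mset xs = replicate_mset n a) = replicate n a"
proof (rule some_equality)
  fix xs assume "mset xs = replicate_mset n a"
  hence "set xs \<subseteq> {a}" "length xs = n"
    by (metis set_mset_mset set_mset_replicate_mset_subset subset_singletonD subset_refl empty_subsetI)
       (metis size_mset size_replicate_mset \<open>mset xs = replicate_mset n a\<close>)
  thus "xs = replicate n a" by (metis replicate_length_same singletonD subsetD)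
qed simp

lemma img_nth_rep:
  assumes "S \<subseteq> {..<m}"
  shows "image_mset (nth (replicate m a)) (mset_set S) = replicate_mset (card S) a"
proof -
  have fin: "finite S" using assms finite_subset by blast
  have "image_mset (nth (replicate m a)) (mset_set S) = image_mset (\<lambda>_. a) (mset_set S)"
    by (rule image_mset_cong) (use assms fin in auto)
  also have "\<dots> = replicate_mset (card S) a"
    using fin by (induction S rule: finite_induct) auto
  finally show ?thesis .
qed

lemma tree_emb_single: "tree_emb (single T :: 'a dtree \<Rightarrow> 'k::comm_ring_1) = single {#T#}"
proof
  fix G show "tree_emb (single T :: 'a dtree \<Rightarrow> 'k::comm_ring_1) G = single {#T#} G"
  proof (cases "\<exists>t. G = {#t#}")
    case True
    then obtain t where "G = {#t#}" by blast
    thus ?thesis by (simp add: tree_emb_single_tree single_apply)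
  next
    case False
    thus ?thesis by (auto simp: tree_emb_other single_apply)
  qed
qed

lemma fprod_singles:
  "fprod (map (\<lambda>i. single {#T i#}) xs) = (single (mset (map T xs)) :: 'a forest \<Rightarrow> 'k::comm_ring_1)"
proof (induction xs)
  case Nil
  show ?case by (simp add: fprod_def funit_def)
next
  case (Cons a xs)
  have "fprod (map (\<lambda>i. single {#T i#}) (a # xs)) = fmult (single {#T a#}) (fprod (map (\<lambda>i. single {#T i#}) xs))"
    by (simp add: fprod_def)
  also have "\<dots> = (single (mset (map T (a # xs))) :: 'a forest \<Rightarrow> 'k)"
    unfolding Cons by (rule ext) (simp add: fmult_single_single)
  finally show ?case .
qed

lemma gl_basis_eq:
  "gl_basis (replicate_mset n (leaf x)) (replicate_mset m (leaf y)) H = (of_nat (Nc x y n m H) :: 'k::comm_ring_1)"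
proof -
  let ?ts = "replicate n (leaf x)" and ?ss = "replicate m (leaf y)"
  have tm: "fmult (single (image_mset (nth ?ss) (mset_set {j\<in>{..<m}. f j = 0})))
              (fprod (map (\<lambda>i. tree_emb (act (?ts ! i) (image_mset (nth ?ss) (mset_set {j\<in>{..<m}. f j = Suc i})))) [0..<n])) H
        = (if H = KK x y {..<m} n f then 1 else (0::'k))" for f
  proof -
    have "map (\<lambda>i. tree_emb (act (?ts ! i) (image_mset (nth ?ss) (mset_set {j\<in>{..<m}. f j = Suc i})))) [0..<n]
        = map (\<lambda>i. (single {#Ct x y (fib {..<m} f (Suc i))#} :: _ \<Rightarrow> 'k)) [0..<n]"
    proof (rule map_cong)
      fix i assume "i \<in> set [0..<n]"
      hence i: "i < n" by simp
      have "image_mset (nth ?ss) (mset_set {j\<in>{..<m}. f j = Suc i}) = replicate_mset (fib {..<m} f (Suc i)) (leaf y)"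
        unfolding fib_def by (rule img_nth_rep) auto
      thus "tree_emb (act (?ts ! i) (image_mset (nth ?ss) (mset_set {j\<in>{..<m}. f j = Suc i}))) = (single {#Ct x y (fib {..<m} f (Suc i))#} :: _ \<Rightarrow> 'k)"
        using i by (simp add: leaf_def act_leaf tree_emb_single Ct_def)
    qed simp
    note M = this
    have Z: "image_mset (nth ?ss) (mset_set {j\<in>{..<m}. f j = 0}) = replicate_mset (fib {..<m} f 0) (leaf y)"
        unfolding fib_def by (rule img_nth_rep) auto
    show ?thesis
      unfolding M Z fprod_singles fmult_single_single KK_def single_apply ..
  qed
  have "gl_basis (replicate_mset n (leaf x)) (replicate_mset m (leaf y)) H
      = (\<Sum>f\<in>{..<m} \<rightarrow>\<^sub>E {..n}. if H = KK x y {..<m} n f then 1 else (0::'k))"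
    unfolding gl_basis_def some_mset_replicate Let_def length_replicate tm ..
  also have "\<dots> = of_nat (card {f\<in>{..<m} \<rightarrow>\<^sub>E {..n}. KK x y {..<m} n f = H})"
    by (simp add: sum.If_cases finite_PiE Int_def eq_commute conj_commute)
  also have "\<dots> = of_nat (Nc x y n m H)"
    by (simp add: NN_Nc)
  finally show ?thesis .
qed

definition nch :: "'d dtree \<Rightarrow> nat" where
  "nch t = (case t of Node d cs \<Rightarrow> size cs)"

definition wt :: "'d forest \<Rightarrow> nat" where
  "wt H = (\<Sum>t\<in>#H. Suc (nch t))"

lemma wt_remove: "t \<in># H \<Longrightarrow> wt H = wt (H - {#t#}) + Suc (nch t)"
proof -
  assume "t \<in># H"
  then obtain H' where "H = add_mset t H'" by (metis multi_member_split)
  thus ?thesis by (simp add: wt_def)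
qed

lemma nch_Ct[simp]: "nch (Ct x y k) = k"
  by (simp add: nch_def Ct_def)

lemma wt_rep: "wt (replicate_mset m (leaf y)) = m"
  by (induction m) (auto simp: wt_def nch_def leaf_def)

lemma Nc_bound: "Nc x y n m H \<noteq> 0 \<Longrightarrow> m \<le> wt H \<and> n \<le> size H"
proof (induction n arbitrary: m H)
  case 0
  hence "H = replicate_mset m (leaf y)" by (simp split: if_splits)
  thus ?case by (simp add: wt_rep)
next
  case (Suc n)
  from Suc.prems obtain k where k0: "k \<in> {..m}" "(m choose k) * (if Ct x y k \<in># H then Nc x y n (m - k) (H - {#Ct x y k#}) else 0) \<noteq> 0"
    unfolding Nc.simps by (rule sum.not_neutral_contains_not_neutral)
  hence k: "k \<le> m" "Ct x y k \<in># H" "Nc x y n (m - k) (H - {#Ct x y k#}) \<noteq> 0"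
    by (auto split: if_splits)
  have IH: "m - k \<le> wt (H - {#Ct x y k#})" "n \<le> size (H - {#Ct x y k#})"
    using Suc.IH[OF k(3)] by auto
  have "wt H = wt (H - {#Ct x y k#}) + Suc k" using wt_remove[OF k(2)] by simp
  moreover have "size (H - {#Ct x y k#}) = size H - 1"
    using k(2) by (auto simp: size_Diff_singleton)
  moreover have "size H > 0" using k(2) by (cases H) auto
  ultimately show ?case using IH k(1) by linarith
qed

lemma pexp_single:
  "pexp (single a) F = (if set_mset F \<subseteq> {a} then 1 / fact (size F) else (0::'k::field_char_0))"
proof (cases "set_mset F \<subseteq> {a}")
  case True
  have F: "F = replicate_mset (count F a) a"
    by (rule multiset_eqI) (use True in \<open>auto simp: not_in_iff\<close>)
  have "pexp (single a) F = (single a a ^ count F a / fact (count F a) :: 'k)"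
    using pexp_superset[of "{a}" F "single a"] True by simp
  also have "\<dots> = 1 / fact (size F)"
    by (subst (2) F) (simp add: single_apply)
  finally show ?thesis using True by simp
next
  case False
  then obtain t where t: "t \<in># F" "t \<noteq> a" by auto
  have "(single a t ^ count F t / fact (count F t) :: 'k) = 0"
    using t by (simp add: single_apply)
  hence "pexp (single a) F = (0::'k)"
    unfolding pexp_def using t by (intro prod_zero) auto
  thus ?thesis using False by simp
qed

lemma rep_of_subset: "set_mset F \<subseteq> {c} \<Longrightarrow> F = replicate_mset (size F) c"
proof -
  assume Fc: "set_mset F \<subseteq> {c}"
  have "sum (count F) (set_mset F) = sum (count F) {c}"
    by (rule sum.mono_neutral_left) (use Fc in \<open>auto simp: not_in_iff\<close>)
  hence "size F = count F c" by (simp add: size_multiset_overloaded_eq)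
  thus ?thesis by (metis Fc multiset_eqI count_replicate_mset not_in_iff singletonD subsetD)
qed

lemma gl_eq:
  "gl (pexp (single (leaf x))) (pexp (single (leaf y))) H
     = (\<Sum>n\<le>size H. \<Sum>m\<le>wt H. of_nat (Nc x y n m H) / (fact n * fact m) :: 'k::field_char_0)"
proof -
  let ?a = "pexp (single (leaf x)) :: _ \<Rightarrow> 'k" and ?b = "pexp (single (leaf y)) :: _ \<Rightarrow> 'k"
  define \<phi> where "\<phi> = (\<lambda>(n::nat, m::nat). (replicate_mset n (leaf x), replicate_mset m (leaf y)))"
  define I where "I = {..size H} \<times> {..wt H}"
  define Z where "Z = {(F,G). ?a F \<noteq> 0 \<and> ?b G \<noteq> 0 \<and> (gl_basis F G H :: 'k) \<noteq> 0}"
  have rep: "F = replicate_mset (size F) c" if Fc: "set_mset F \<subseteq> {c}" for F c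
  proof -
    have "sum (count F) (set_mset F) = sum (count F) {c}"
      by (rule sum.mono_neutral_left) (use Fc in \<open>auto simp: not_in_iff\<close>)
    hence "size F = count F c" by (simp add: size_multiset_overloaded_eq)
    thus ?thesis by (metis Fc multiset_eqI count_replicate_mset not_in_iff singletonD subsetD)
  qed
  have ZI: "Z \<subseteq> \<phi> ` I"
  proof
    fix p assume "p \<in> Z"
    then obtain F G where p: "p = (F, G)" and FG: "?a F \<noteq> 0" "?b G \<noteq> 0" "(gl_basis F G H :: 'k) \<noteq> 0"
      unfolding Z_def by blast
    have F: "F = replicate_mset (size F) (leaf x)" using FG(1) rep by (simp add: pexp_single split: if_splits)
    have G: "G = replicate_mset (size G) (leaf y)" using FG(2) rep by (simp add: pexp_single split: if_splits)
    have "(of_nat (Nc x y (size F) (size G) H) :: 'k) \<noteq> 0"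
      using FG(3) F G gl_basis_eq by metis
    hence "Nc x y (size F) (size G) H \<noteq> 0" by (metis of_nat_0)
    hence "size G \<le> wt H \<and> size F \<le> size H" by (rule Nc_bound)
    thus "p \<in> \<phi> ` I" unfolding p I_def \<phi>_def using F G
      by (intro image_eqI[of _ _ "(size F, size G)"]) (auto simp del: replicate_mset_0)
  qed
  have inj: "inj_on \<phi> I"
  proof (rule inj_onI)
    fix p q assume "p \<in> I" "q \<in> I" "\<phi> p = \<phi> q"
    thus "p = q" unfolding \<phi>_def
      by (cases p, cases q) (simp, metis size_replicate_mset)
  qed
  have "gl ?a ?b H = (\<Sum>(F,G)\<in>Z. ?a F * ?b G * gl_basis F G H)"
    by (simp add: gl_def Z_def)
  also have "\<dots> = (\<Sum>(F,G)\<in>\<phi> ` I. ?a F * ?b G * gl_basis F G H)"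
  proof (rule sum.mono_neutral_left)
    show "finite (\<phi> ` I)" unfolding I_def by simp
    show "Z \<subseteq> \<phi> ` I" by (rule ZI)
    show "\<forall>p\<in>\<phi> ` I - Z. (case p of (F, G) \<Rightarrow> ?a F * ?b G * gl_basis F G H) = 0"
      unfolding Z_def by auto
  qed
  also have "\<dots> = (\<Sum>(n,m)\<in>I. ?a (replicate_mset n (leaf x)) * ?b (replicate_mset m (leaf y))
                    * gl_basis (replicate_mset n (leaf x)) (replicate_mset m (leaf y)) H)"
    by (subst sum.reindex[OF inj]) (simp add: \<phi>_def case_prod_beta)
  also have "\<dots> = (\<Sum>(n,m)\<in>I. of_nat (Nc x y n m H) / (fact n * fact m))"
  proof (rule sum.cong)
    fix p assume "p \<in> I"
    obtain n m where p: "p = (n, m)" by (cases p)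
    show "(case p of (n, m) \<Rightarrow> ?a (replicate_mset n (leaf x)) * ?b (replicate_mset m (leaf y))
                    * gl_basis (replicate_mset n (leaf x)) (replicate_mset m (leaf y)) H)
        = (case p of (n, m) \<Rightarrow> of_nat (Nc x y n m H) / (fact n * fact m))"
      unfolding p by (simp add: pexp_single gl_basis_eq)
  qed simp
  also have "\<dots> = (\<Sum>n\<le>size H. \<Sum>m\<le>wt H. of_nat (Nc x y n m H) / (fact n * fact m))"
    unfolding I_def by (simp add: sum.cartesian_product)
  finally show ?thesis .
qed

definition Phi :: "'d \<Rightarrow> 'd \<Rightarrow> nat \<Rightarrow> 'd forest \<Rightarrow> 'k::field_char_0" where
  "Phi x y n H = (\<Sum>m\<le>wt H. of_nat (Nc x y n m H) / fact m)"

definition cC :: "'d \<Rightarrow> 'd \<Rightarrow> 'd dtree \<Rightarrow> 'k::field_char_0" where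
  "cC x y u = (if \<exists>k. u = Ct x y k then 1 / fact (nch u) else 0)"

lemma Phi_bound:
  assumes "wt H \<le> B"
  shows "(\<Sum>m\<le>B. of_nat (Nc x y n m H) / fact m) = (Phi x y n H :: 'k::field_char_0)"
  unfolding Phi_def
proof (rule sum.mono_neutral_right)
  show "\<forall>m\<in>{..B} - {..wt H}. (of_nat (Nc x y n m H) / fact m :: 'k) = 0"
    using Nc_bound by fastforce
qed (use assms in auto)

lemma Phi_zero: "size H < n \<Longrightarrow> Phi x y n H = 0"
  unfolding Phi_def using Nc_bound by (fastforce intro!: sum.neutral)

lemma Phi_0: "Phi x y 0 H = pexp (single (leaf y)) H"
proof (cases "set_mset H \<subseteq> {leaf y}")
  case True
  have H: "H = replicate_mset (size H) (leaf y)" using True by (rule rep_of_subset)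
  have w: "wt H = size H" by (subst H, subst (2) H) (simp add: wt_rep)
  have "Phi x y 0 H = (\<Sum>m\<le>size H. if m = size H then 1 / fact m else (0::'a))"
    unfolding Phi_def w
  proof (rule sum.cong)
    fix m assume "m \<in> {..size H}"
    have "(H = replicate_mset m (leaf y)) = (m = size H)"
      by (subst H) (metis size_replicate_mset)
    thus "(of_nat (Nc x y 0 m H) / fact m :: 'a) = (if m = size H then 1 / fact m else 0)" by simp
  qed simp
  also have "\<dots> = 1 / fact (size H)" by simp
  finally show ?thesis using True by (simp add: pexp_single)
next
  case False
  have "set_mset (replicate_mset m (leaf y)) \<subseteq> {leaf y}" for m by (induction m) auto
  hence "\<forall>m. H \<noteq> replicate_mset m (leaf y)" using False by metis
  thus ?thesis using False by (simp add: Phi_def pexp_single)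
qed

lemma Ct_inj: "Ct x y k = Ct x y k' \<Longrightarrow> k = k'"
  unfolding Ct_def by (metis dtree.inject size_replicate_mset)

lemma binom_div_fact:
  "k \<le> m \<Longrightarrow> (of_nat (m choose k) :: 'k::field_char_0) / fact m = 1 / (fact k * fact (m - k))"
  by (simp add: binomial_fact)

lemma cC_Ct[simp]: "cC x y (Ct x y k) = 1 / fact k"
  by (auto simp: cC_def)

lemma Phi_Suc:
  "Phi x y (Suc n) H = (\<Sum>t\<in>set_mset H. cC x y t * (Phi x y n (H - {#t#}) :: 'k::field_char_0))"
proof -
  define w where "w = wt H"
  define g where "g k j = (if Ct x y k \<in># H then Nc x y n j (H - {#Ct x y k#}) else 0)" for k j
  define h where "h k j = (of_nat (g k j) / (fact k * fact j) :: 'k)" for k j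
  have "Phi x y (Suc n) H = (\<Sum>m\<le>w. \<Sum>k\<le>m. h k (m - k))"
    unfolding Phi_def w_def[symmetric]
  proof (rule sum.cong)
    fix m assume "m \<in> {..w}"
    have "(of_nat (Nc x y (Suc n) m H) :: 'k) / fact m = (\<Sum>k\<le>m. of_nat (m choose k) / fact m * of_nat (g k (m - k)))"
      by (simp add: g_def sum_divide_distrib algebra_simps)
    also have "\<dots> = (\<Sum>k\<le>m. h k (m - k))"
      by (rule sum.cong) (auto simp: binom_div_fact h_def)
    finally show "(of_nat (Nc x y (Suc n) m H) :: 'k) / fact m = (\<Sum>k\<le>m. h k (m - k))" .
  qed simp
  also have "\<dots> = (\<Sum>(k, j)\<in>{(k, j). k + j \<le> w}. h k j)"
    by (rule sum.triangle_reindex_eq[symmetric])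
  also have "{(k, j). k + j \<le> w} = Sigma {..w} (\<lambda>k. {..w - k})" by auto
  also have "(\<Sum>(k, j)\<in>Sigma {..w} (\<lambda>k. {..w - k}). h k j) = (\<Sum>k\<le>w. \<Sum>j\<le>w - k. h k j)"
    by (rule sum.Sigma[symmetric]) auto
  also have "\<dots> = (\<Sum>k\<le>w. if Ct x y k \<in># H then 1 / fact k * Phi x y n (H - {#Ct x y k#}) else 0)"
  proof (rule sum.cong)
    fix k assume k: "k \<in> {..w}"
    show "(\<Sum>j\<le>w - k. h k j) = (if Ct x y k \<in># H then 1 / fact k * Phi x y n (H - {#Ct x y k#}) else 0)"
    proof (cases "Ct x y k \<in># H")
      case True
      have "wt (H - {#Ct x y k#}) \<le> w - k" using wt_remove[OF True] by (simp add: w_def)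
      hence "(\<Sum>j\<le>w - k. of_nat (Nc x y n j (H - {#Ct x y k#})) / fact j) = (Phi x y n (H - {#Ct x y k#}) :: 'k)"
        by (rule Phi_bound)
      thus ?thesis using True
        by (simp add: h_def g_def sum_distrib_left field_simps)
    next
      case False
      thus ?thesis by (simp add: h_def g_def)
    qed
  qed simp
  also have "\<dots> = (\<Sum>k\<in>{k. Ct x y k \<in># H}. 1 / fact k * Phi x y n (H - {#Ct x y k#}))"
  proof -
    have "{k. Ct x y k \<in># H} \<subseteq> {..w}"
    proof
      fix k assume "k \<in> {k. Ct x y k \<in># H}"
      hence "Ct x y k \<in># H" by simp
      from wt_remove[OF this] show "k \<in> {..w}" by (simp add: w_def)
    qed
    hence e: "{k. k \<le> w \<and> Ct x y k \<in># H} = {k. Ct x y k \<in># H}" by auto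
    show ?thesis by (simp add: sum.If_cases Int_def e)
  qed
  also have "\<dots> = (\<Sum>t\<in>Ct x y ` {k. Ct x y k \<in># H}. cC x y t * Phi x y n (H - {#t#}))"
    by (subst sum.reindex) (auto simp: inj_on_def Ct_inj)
  also have "\<dots> = (\<Sum>t\<in>set_mset H. cC x y t * Phi x y n (H - {#t#}))"
    by (rule sum.mono_neutral_left) (auto simp: cC_def)
  finally show ?thesis .
qed

lemma size_remove_field:
  "t \<in># H \<Longrightarrow> (of_nat (size (H - {#t#})) :: 'k::field_char_0) = of_nat (size H) - 1"
proof -
  assume t: "t \<in># H"
  hence "size H > 0" by (cases H) auto
  thus ?thesis using t by (simp add: size_Diff_singleton of_nat_diff)
qed

lemma Phi_Y:
  "(of_nat (size H) - of_nat n) * Phi x y n H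
     = (if leaf y \<in># H then Phi x y n (H - {#leaf y#}) else (0::'k::field_char_0))"
proof (induction n arbitrary: H)
  case 0
  have "of_nat (size H) * pexp (single (leaf y)) H = (\<Sum>t\<in>set_mset H. single (leaf y) t * (pexp (single (leaf y)) (H - {#t#}) :: 'k))"
    by (rule pexp_rec)
  also have "\<dots> = (\<Sum>t\<in>set_mset H. if t = leaf y then pexp (single (leaf y)) (H - {#t#}) else 0)"
    by (rule sum.cong) (auto simp: single_apply)
  also have "\<dots> = (if leaf y \<in># H then pexp (single (leaf y)) (H - {#leaf y#}) else 0)"
    by (simp add: sum.delta')
  finally show ?case by (simp add: Phi_0)
next
  case (Suc n)
  let ?Y = "leaf y"
  have "(of_nat (size H) - of_nat (Suc n)) * Phi x y (Suc n) H
      = (\<Sum>t\<in>set_mset H. cC x y t * ((of_nat (size (H - {#t#})) - of_nat n) * (Phi x y n (H - {#t#}) :: 'k)))"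
    unfolding Phi_Suc sum_distrib_left
    by (rule sum.cong) (auto simp: size_remove_field algebra_simps)
  also have "\<dots> = (\<Sum>t\<in>set_mset H. cC x y t * (if ?Y \<in># H - {#t#} then Phi x y n (H - {#t#} - {#?Y#}) else 0))"
    by (simp add: Suc.IH)
  also have "\<dots> = (if ?Y \<in># H then Phi x y (Suc n) (H - {#?Y#}) else 0)"
  proof (cases "?Y \<in># H")
    case False
    hence "\<forall>t. \<not> ?Y \<in># H - {#t#}" by (meson in_diffD)
    thus ?thesis using False by simp
  next
    case True
    have "(\<Sum>t\<in>set_mset H. cC x y t * (if ?Y \<in># H - {#t#} then Phi x y n (H - {#t#} - {#?Y#}) else 0))
        = (\<Sum>t\<in>set_mset H. if t \<in># H - {#?Y#} then cC x y t * Phi x y n (H - {#?Y#} - {#t#}) else 0)"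
    proof (rule sum.cong)
      fix t assume t: "t \<in> set_mset H"
      have "(?Y \<in># H - {#t#}) = (t \<in># H - {#?Y#})"
        using t True by (cases "t = ?Y") (auto simp: in_diff_count)
      moreover have "H - {#t#} - {#?Y#} = H - {#?Y#} - {#t#}" by (simp add: diff_right_commute add_mset_commute)
      ultimately show "cC x y t * (if ?Y \<in># H - {#t#} then Phi x y n (H - {#t#} - {#?Y#}) else 0)
          = (if t \<in># H - {#?Y#} then cC x y t * Phi x y n (H - {#?Y#} - {#t#}) else 0)" by simp
    qed simp
    also have "\<dots> = (\<Sum>t\<in>set_mset H \<inter> set_mset (H - {#?Y#}). cC x y t * Phi x y n (H - {#?Y#} - {#t#}))"
      by (simp add: sum.If_cases Int_def)
    also have "set_mset H \<inter> set_mset (H - {#?Y#}) = set_mset (H - {#?Y#})"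
      by (auto dest: in_diffD)
    finally show ?thesis using True by (simp add: Phi_Suc)
  qed
  finally show ?case .
qed

definition RR :: "'d \<Rightarrow> 'd \<Rightarrow> 'd forest \<Rightarrow> 'k::field_char_0" where
  "RR x y H = (\<Sum>n\<le>size H. Phi x y n H / fact n)"

lemma RR_empty: "RR x y {#} = 1"
  by (simp add: RR_def Phi_0)

lemma RR_rec:
  "of_nat (size H) * RR x y H = (\<Sum>t\<in>set_mset H. (single (leaf y) t + cC x y t) * (RR x y (H - {#t#}) :: 'k::field_char_0))"
proof (cases "H = {#}")
  case True
  thus ?thesis by simp
next
  case False
  then obtain s where s: "size H = Suc s" by (cases H) auto
  have sz: "t \<in># H \<Longrightarrow> size (H - {#t#}) = s" for t using s by (simp add: size_Diff_singleton)
  define B where "B n = (if leaf y \<in># H then Phi x y n (H - {#leaf y#}) else (0::'k))" for n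
  have split: "of_nat (size H) * Phi x y n H = of_nat n * Phi x y n H + B n" for n
  proof -
    have "(of_nat (size H) - of_nat n) * Phi x y n H = B n" unfolding B_def by (rule Phi_Y)
    thus ?thesis by (simp add: algebra_simps)
  qed
  have S1: "of_nat (size H) * (RR x y H :: 'k) = (\<Sum>n\<le>Suc s. of_nat n * Phi x y n H / fact n)
      + (\<Sum>n\<le>Suc s. B n / fact n)"
  proof -
    have "of_nat (size H) * (RR x y H :: 'k) = (\<Sum>n\<le>Suc s. of_nat (size H) * Phi x y n H / fact n)"
      unfolding RR_def s[symmetric] by (simp add: sum_distrib_left)
    also have "\<dots> = (\<Sum>n\<le>Suc s. of_nat n * Phi x y n H / fact n + B n / fact n)"
      by (rule sum.cong) (simp_all add: split add_divide_distrib)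
    finally show ?thesis by (simp add: sum.distrib)
  qed
  have S2: "(\<Sum>n\<le>Suc s. of_nat n * Phi x y n H / fact n) = (\<Sum>n\<le>s. Phi x y (Suc n) H / fact n :: 'k)"
  proof -
    have "(\<Sum>n\<le>Suc s. of_nat n * Phi x y n H / fact n) = (\<Sum>n\<le>s. of_nat (Suc n) * Phi x y (Suc n) H / fact (Suc n) :: 'k)"
      by (subst sum.atMost_Suc_shift) simp
    also have "\<dots> = (\<Sum>n\<le>s. Phi x y (Suc n) H / fact n)"
    proof -
      have fs: "of_nat (Suc n) * a / fact (Suc n) = a / (fact n :: 'k)" for n a
      proof -
        have "(fact (Suc n) :: 'k) = of_nat (Suc n) * fact n" by simp
        moreover have "(of_nat (Suc n) :: 'k) \<noteq> 0" by (simp del: of_nat_Suc)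
        ultimately show ?thesis by (simp del: of_nat_Suc fact_Suc)
      qed
      show ?thesis by (simp only: fs)
    qed
    finally show ?thesis .
  qed
  have S3: "(\<Sum>n\<le>s. Phi x y (Suc n) H / fact n :: 'k) = (\<Sum>t\<in>set_mset H. cC x y t * RR x y (H - {#t#}))"
  proof -
    have "(\<Sum>n\<le>s. Phi x y (Suc n) H / fact n) = (\<Sum>n\<le>s. \<Sum>t\<in>set_mset H. cC x y t * (Phi x y n (H - {#t#}) / fact n))"
      unfolding Phi_Suc by (simp add: sum_divide_distrib)
    also have "\<dots> = (\<Sum>t\<in>set_mset H. \<Sum>n\<le>s. cC x y t * (Phi x y n (H - {#t#}) / fact n))"
      by (rule sum.swap)
    also have "\<dots> = (\<Sum>t\<in>set_mset H. cC x y t * RR x y (H - {#t#}))"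
      by (rule sum.cong) (simp_all add: RR_def sz sum_distrib_left)
    finally show ?thesis .
  qed
  have S4: "(\<Sum>n\<le>Suc s. B n / fact n) = (\<Sum>t\<in>set_mset H. single (leaf y) t * (RR x y (H - {#t#}) :: 'k))"
  proof (cases "leaf y \<in># H")
    case True
    have "(\<Sum>n\<le>Suc s. B n / fact n) = (\<Sum>n\<le>s. Phi x y n (H - {#leaf y#}) / fact n) + Phi x y (Suc s) (H - {#leaf y#}) / fact (Suc s)"
      using True by (simp add: B_def)
    also have "Phi x y (Suc s) (H - {#leaf y#}) = 0"
      by (rule Phi_zero) (simp add: sz[OF True])
    also have "(\<Sum>n\<le>s. Phi x y n (H - {#leaf y#}) / fact n) = RR x y (H - {#leaf y#})"
      unfolding RR_def sz[OF True] ..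
    also have "(RR x y (H - {#leaf y#}) :: 'k) = (\<Sum>t\<in>set_mset H. single (leaf y) t * RR x y (H - {#t#}))"
    proof -
      have "(\<Sum>t\<in>set_mset H. single (leaf y) t * (RR x y (H - {#t#}) :: 'k))
          = (\<Sum>t\<in>set_mset H. if t = leaf y then RR x y (H - {#t#}) else (0::'k))"
        by (rule sum.cong) (simp_all add: single_apply)
      also have "\<dots> = RR x y (H - {#leaf y#})" using True by (simp add: sum.delta')
      finally show ?thesis by simp
    qed
    finally show ?thesis by simp
  next
    case False
    have "(\<Sum>n\<le>Suc s. B n / fact n) = 0" by (simp add: B_def False)
    moreover have "(\<Sum>t\<in>set_mset H. single (leaf y) t * RR x y (H - {#t#})) = (0::'k)"
      by (rule sum.neutral) (use False in \<open>auto simp: single_apply\<close>)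
    ultimately show ?thesis by simp
  qed
  show ?thesis unfolding S1 S2 S3 S4 by (simp add: sum.distrib[symmetric] algebra_simps)
qed

lemma RR_pexp: "RR x y H = (pexp (\<lambda>u. single (leaf y) u + cC x y u) H :: 'k::field_char_0)"
proof (induction "size H" arbitrary: H rule: less_induct)
  case less
  show ?case
  proof (cases "H = {#}")
    case True
    thus ?thesis by (simp add: RR_empty)
  next
    case False
    hence nz: "(of_nat (size H) :: 'k) \<noteq> 0" by simp
    have "of_nat (size H) * (RR x y H :: 'k) = of_nat (size H) * pexp (\<lambda>u. single (leaf y) u + cC x y u) H"
      unfolding RR_rec pexp_rec
    proof (rule sum.cong)
      fix t assume t: "t \<in> set_mset H"
      have "size H > 0" using t by (cases H) auto
      hence lt: "size (H - {#t#}) < size H" using t by (simp add: size_Diff_singleton)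
      show "(single (leaf y) t + cC x y t) * RR x y (H - {#t#}) = (single (leaf y) t + cC x y t) * (pexp (\<lambda>u. single (leaf y) u + cC x y u) (H - {#t#}) :: 'k)"
        using less.hyps[OF lt] by simp
    qed simp
    thus ?thesis using nz by simp
  qed
qed

lemma fexp_single_leaf: "fexp (tree_emb (single t)) = (pexp (single t) :: _ \<Rightarrow> 'k::field_char_0)"
  by (rule ext) (rule fexp_tree_emb)

lemma act_lin_eq:
  "act_lin (leaf x) (fexp (tree_emb (single (leaf y)))) u = (cC x y u :: 'k::field_char_0)"
proof -
  let ?E = "pexp (single (leaf y)) :: _ \<Rightarrow> 'k"
  have act: "act (leaf x) F = (single (Node x F) :: _ \<Rightarrow> 'k)" for F
    unfolding leaf_def by (rule act_leaf)
  have "act_lin (leaf x) (fexp (tree_emb (single (leaf y)))) u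
      = (\<Sum>F\<in>{F. ?E F \<noteq> 0 \<and> (single (Node x F) u :: 'k) \<noteq> 0}. ?E F * single (Node x F) u)"
    unfolding act_lin_def lin_def fexp_single_leaf act ..
  also have "\<dots> = cC x y u"
  proof (cases "\<exists>k. u = Ct x y k")
    case True
    then obtain k where k: "u = Ct x y k" by blast
    have e: "{F. ?E F \<noteq> 0 \<and> (single (Node x F) u :: 'k) \<noteq> 0} = {replicate_mset k (leaf y)}"
      using k by (auto simp: single_apply Ct_def pexp_single split: if_splits)
    have v: "(\<Sum>F\<in>{replicate_mset k (leaf y)}. ?E F * single (Node x F) u) = 1 / fact k"
      using k by (simp add: single_apply pexp_single Ct_def)
    show ?thesis by (subst e, subst v, simp add: k)
  next
    case False
    have e: "{F. ?E F \<noteq> 0 \<and> (single (Node x F) u :: 'k) \<noteq> 0} = {}"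
    proof (rule ccontr)
      assume "{F. ?E F \<noteq> 0 \<and> (single (Node x F) u :: 'k) \<noteq> 0} \<noteq> {}"
      then obtain F where F: "?E F \<noteq> 0" "u = Node x F" by (auto simp: single_apply split: if_splits)
      have "set_mset F \<subseteq> {leaf y}" using F(1) by (simp add: pexp_single split: if_splits)
      hence "F = replicate_mset (size F) (leaf y)" by (rule rep_of_subset)
      hence "u = Ct x y (size F)" using F(2) by (simp add: Ct_def)
      thus False using False by blast
    qed
    show ?thesis unfolding e using False by (simp add: cC_def)
  qed
  finally show ?thesis .
qed

theorem proposition6p1:
  fixes x y :: 'd
  shows "gl (fexp (tree_emb (single (leaf x))) :: ('d, 'k::field_char_0) fcomb)
            (fexp (tree_emb (single (leaf y))))
         = fexp (tree_emb (\<lambda>u. single (leaf y) u + act_lin (leaf x) (fexp (tree_emb (single (leaf y)))) u))"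
proof (rule ext)
  fix H
  have c: "(\<lambda>u. single (leaf y) u + act_lin (leaf x) (fexp (tree_emb (single (leaf y)))) u)
      = (\<lambda>u. single (leaf y) u + (cC x y u :: 'k))"
    by (simp add: act_lin_eq)
  have "gl (fexp (tree_emb (single (leaf x))) :: ('d, 'k) fcomb) (fexp (tree_emb (single (leaf y)))) H
      = (\<Sum>n\<le>size H. \<Sum>m\<le>wt H. of_nat (Nc x y n m H) / (fact n * fact m))"
    unfolding fexp_single_leaf by (rule gl_eq)
  also have "\<dots> = RR x y H"
    unfolding RR_def Phi_def
    by (rule sum.cong) (simp_all add: sum_divide_distrib mult.commute)
  also have "\<dots> = pexp (\<lambda>u. single (leaf y) u + cC x y u) H"
    by (rule RR_pexp)
  also have "\<dots> = fexp (tree_emb (\<lambda>u. single (leaf y) u + act_lin (leaf x) (fexp (tree_emb (single (leaf y)))) u)) H"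
    unfolding c fexp_tree_emb ..
  finally show "gl (fexp (tree_emb (single (leaf x))) :: ('d, 'k) fcomb) (fexp (tree_emb (single (leaf y)))) H
      = fexp (tree_emb (\<lambda>u. single (leaf y) u + act_lin (leaf x) (fexp (tree_emb (single (leaf y)))) u)) H" .
qed

end
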